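(* Let $G$ be a finite abelian group, $R\subseteq \mathbb{Q}$ a subring, and $n\geq 1$ an integer. Let $S$ be the set of primes $\ell$ such that $\ell\mid \#G$ and $\ell^{-1}\notin R$. Then \[ Q_n(R,G)\cong \bigoplus_{\ell\in S}\mathrm{Syl}_{\ell}\big(Q_n(\mathbb{Z},G)\big) \] as $R$-modules, where the right-hand side is an $R$-module via the following structure on a finite abelian group $H$ all of whose prime divisors of $\#H$ are non-invertible in $R$: for $\frac{a}{b}\in R$ in lowest terms and $h\in H$, $\frac{a}{b}\cdot h := (h^{1/b})^a$, where $h^{1/b}$ is the unique element whose $b$-th power is $h$ (which exists since $\gcd(b,\#H)=1$).
   Context: For a ring $A$ and abelian group $G$, $A[G]$ is the group algebra, $[g]$ denotes $g$ viewed in $A[G]$, $I(A,G)$ is the kernel of the augmentation map $A[G]\to A$, $[g]\mapsto 1$, and $Q_n(A,G)=I(A,G)^n/I(A,G)^{n+1}$ (which for $A=\mathbb{Z}$ is a finite abelian group). For a finite abelian group $H$ and a prime $\ell$, $\mathrm{Syl}_\ell(H)$ is its $\ell$-Sylow subgroup, trivial if $\ell\nmid\#H$. *)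

theory Defs
  imports Complex_Main "HOL-Algebra.Group" "HOL-Computational_Algebra.Primes"
begin

definition subring_rat :: "rat set \<Rightarrow> bool" where
  "subring_rat R \<longleftrightarrow> 1 \<in> R \<and> (\<forall>x\<in>R. \<forall>y\<in>R. x + y \<in> R \<and> - x \<in> R \<and> x * y \<in> R)"

text \<open>Group algebra A[G] for a coefficient ring A (a subring of Q): functions on the
  (finite) carrier of G with values in A, vanishing outside the carrier.\<close>
definition ring_alg :: "('a, 'b) monoid_scheme \<Rightarrow> rat set \<Rightarrow> ('a \<Rightarrow> rat) set" where
  "ring_alg G A = {f. (\<forall>x. x \<notin> carrier G \<longrightarrow> f x = 0) \<and> (\<forall>x. f x \<in> A)}"

definition galg_mult :: "('a, 'b) monoid_scheme \<Rightarrow> ('a \<Rightarrow> rat) \<Rightarrow> ('a \<Rightarrow> rat) \<Rightarrow> 'a \<Rightarrow> rat" where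
  "galg_mult G f g = (\<lambda>x. if x \<in> carrier G
      then (\<Sum>y\<in>carrier G. f y * g (x \<otimes>\<^bsub>G\<^esub> inv\<^bsub>G\<^esub> y)) else 0)"

definition aug_ideal :: "('a, 'b) monoid_scheme \<Rightarrow> rat set \<Rightarrow> ('a \<Rightarrow> rat) set" where
  "aug_ideal G A = {f \<in> ring_alg G A. (\<Sum>x\<in>carrier G. f x) = 0}"

inductive_set ideal_prod :: "('a, 'b) monoid_scheme \<Rightarrow> ('a \<Rightarrow> rat) set \<Rightarrow> ('a \<Rightarrow> rat) set
    \<Rightarrow> ('a \<Rightarrow> rat) set" for G X Y where
  zero: "(\<lambda>x. 0) \<in> ideal_prod G X Y"
| step: "f \<in> X \<Longrightarrow> g \<in> Y \<Longrightarrow> h \<in> ideal_prod G X Y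
          \<Longrightarrow> (\<lambda>x. galg_mult G f g x + h x) \<in> ideal_prod G X Y"

fun aug_pow :: "('a, 'b) monoid_scheme \<Rightarrow> rat set \<Rightarrow> nat \<Rightarrow> ('a \<Rightarrow> rat) set" where
  "aug_pow G A 0 = ring_alg G A"
| "aug_pow G A (Suc n) = ideal_prod G (aug_ideal G A) (aug_pow G A n)"

definition qcoset :: "('a \<Rightarrow> rat) set \<Rightarrow> ('a \<Rightarrow> rat) \<Rightarrow> ('a \<Rightarrow> rat) set" where
  "qcoset J x = {(\<lambda>a. x a + j a) | j. j \<in> J}"

definition Qn :: "('a, 'b) monoid_scheme \<Rightarrow> rat set \<Rightarrow> nat \<Rightarrow> ('a \<Rightarrow> rat) set set" where
  "Qn G A n = qcoset (aug_pow G A (Suc n)) ` aug_pow G A n"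

definition qadd :: "('a \<Rightarrow> rat) set \<Rightarrow> ('a \<Rightarrow> rat) set \<Rightarrow> ('a \<Rightarrow> rat) set" where
  "qadd X Y = {(\<lambda>a. x a + y a) | x y. x \<in> X \<and> y \<in> Y}"

definition qsmul :: "('a \<Rightarrow> rat) set \<Rightarrow> rat \<Rightarrow> ('a \<Rightarrow> rat) set \<Rightarrow> ('a \<Rightarrow> rat) set" where
  "qsmul J r X = {(\<lambda>a. r * x a + j a) | x j. x \<in> X \<and> j \<in> J}"

text \<open>The zero of Q_n(Z,G), i.e. the subgroup I(Z,G)^(n+1).\<close>
abbreviation JZ :: "('a, 'b) monoid_scheme \<Rightarrow> nat \<Rightarrow> ('a \<Rightarrow> rat) set" where
  "JZ G n \<equiv> aug_pow G \<int> (Suc n)"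

definition SylQ :: "('a, 'b) monoid_scheme \<Rightarrow> nat \<Rightarrow> nat \<Rightarrow> ('a \<Rightarrow> rat) set set" where
  "SylQ G n l = {X \<in> Qn G \<int> n. \<exists>k. qsmul (JZ G n) (of_nat (l ^ k)) X = JZ G n}"

definition DS :: "('a, 'b) monoid_scheme \<Rightarrow> nat \<Rightarrow> nat set \<Rightarrow> (nat \<Rightarrow> ('a \<Rightarrow> rat) set) set" where
  "DS G n S = {F. (\<forall>l\<in>S. F l \<in> SylQ G n l) \<and> (\<forall>l. l \<notin> S \<longrightarrow> F l = JZ G n)}"

definition ds_add :: "(nat \<Rightarrow> ('a \<Rightarrow> rat) set) \<Rightarrow> (nat \<Rightarrow> ('a \<Rightarrow> rat) set) \<Rightarrow> nat \<Rightarrow> ('a \<Rightarrow> rat) set" where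
  "ds_add F F' = (\<lambda>l. qadd (F l) (F' l))"

definition ds_zmult :: "('a, 'b) monoid_scheme \<Rightarrow> nat \<Rightarrow> int \<Rightarrow> (nat \<Rightarrow> ('a \<Rightarrow> rat) set)
    \<Rightarrow> nat \<Rightarrow> ('a \<Rightarrow> rat) set" where
  "ds_zmult G n k F = (\<lambda>l. qsmul (JZ G n) (of_int k) (F l))"

definition ds_rsmul :: "('a, 'b) monoid_scheme \<Rightarrow> nat \<Rightarrow> nat set \<Rightarrow> rat
    \<Rightarrow> (nat \<Rightarrow> ('a \<Rightarrow> rat) set) \<Rightarrow> nat \<Rightarrow> ('a \<Rightarrow> rat) set" where
  "ds_rsmul G n S r F = (case quotient_of r of (a, b) \<Rightarrow>
     ds_zmult G n a (THE F'. F' \<in> DS G n S \<and> ds_zmult G n b F' = F))"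

end

theory Submission
  imports Defs "HOL-Library.Function_Algebras"
begin


definition dlt :: "'a \<Rightarrow> 'a \<Rightarrow> rat" where "dlt x = (\<lambda>a. if a = x then 1 else 0)"

lemma galg_mult_add_left: "galg_mult G (f + f') g = galg_mult G f g + galg_mult G f' g"
  by (auto simp: galg_mult_def fun_eq_iff sum.distrib algebra_simps)

lemma galg_mult_add_right: "galg_mult G f (g + g') = galg_mult G f g + galg_mult G f g'"
  by (auto simp: galg_mult_def fun_eq_iff sum.distrib algebra_simps)

lemma galg_mult_smul_left: "galg_mult G (\<lambda>a. c * f a) g = (\<lambda>a. c * galg_mult G f g a)"
  by (auto simp: galg_mult_def fun_eq_iff sum_distrib_left mult.assoc)

lemma galg_mult_smul_right: "galg_mult G f (\<lambda>a. c * g a) = (\<lambda>a. c * galg_mult G f g a)"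
  by (auto simp: galg_mult_def fun_eq_iff sum_distrib_left algebra_simps)

lemma galg_mult_supp: "x \<notin> carrier G \<Longrightarrow> galg_mult G f g x = 0"
  by (simp add: galg_mult_def)

lemma (in group) sum_shift:
  assumes "a \<in> carrier G"
  shows "(\<Sum>y\<in>carrier G. h (a \<otimes> inv y)) = (\<Sum>y\<in>carrier G. (h y :: rat))"
proof -
  have h: "\<And>b. b \<in> carrier G \<Longrightarrow> a \<otimes> (inv a \<otimes> b) = b" by (simp add: assms m_assoc[symmetric])
  show ?thesis
  by (rule sum.reindex_bij_witness[where i = "\<lambda>z. inv z \<otimes> a" and j = "\<lambda>y. a \<otimes> inv y"])
     (use assms in \<open>auto simp: inv_mult_group m_assoc h\<close>)
qed

lemma (in group) sum_shift_r:
  assumes "y \<in> carrier G"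
  shows "(\<Sum>a\<in>carrier G. h (a \<otimes> inv y)) = (\<Sum>a\<in>carrier G. (h a :: rat))"
  by (rule sum.reindex_bij_witness[where i = "\<lambda>z. z \<otimes> y" and j = "\<lambda>a. a \<otimes> inv y"])
     (use assms in \<open>auto simp: m_assoc\<close>)

lemma galg_mult_sum:
  assumes "group G"
  shows "(\<Sum>a\<in>carrier G. galg_mult G f g a) = (\<Sum>y\<in>carrier G. f y) * (\<Sum>y\<in>carrier G. g y)"
proof -
  have "(\<Sum>a\<in>carrier G. galg_mult G f g a) = (\<Sum>a\<in>carrier G. \<Sum>y\<in>carrier G. f y * g (a \<otimes>\<^bsub>G\<^esub> inv\<^bsub>G\<^esub> y))"
    by (simp add: galg_mult_def)
  also have "\<dots> = (\<Sum>y\<in>carrier G. \<Sum>a\<in>carrier G. f y * g (a \<otimes>\<^bsub>G\<^esub> inv\<^bsub>G\<^esub> y))"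
    by (rule sum.swap)
  also have "\<dots> = (\<Sum>y\<in>carrier G. f y * (\<Sum>a\<in>carrier G. g a))"
    by (rule sum.cong) (auto simp: sum_distrib_left[symmetric] group.sum_shift_r[OF assms])
  finally show ?thesis by (simp add: sum_distrib_right)
qed

lemma galg_mult_dlt:
  assumes "group G" "x \<in> carrier G" "a \<in> carrier G" "finite (carrier G)"
  shows "galg_mult G (dlt x) h a = h (a \<otimes>\<^bsub>G\<^esub> inv\<^bsub>G\<^esub> x)"
proof -
  have "galg_mult G (dlt x) h a = (\<Sum>y\<in>carrier G. if x = y then h (a \<otimes>\<^bsub>G\<^esub> inv\<^bsub>G\<^esub> y) else 0)"
    unfolding galg_mult_def dlt_def using assms(3) by (simp, intro sum.cong, auto)
  also have "\<dots> = h (a \<otimes>\<^bsub>G\<^esub> inv\<^bsub>G\<^esub> x)" using assms by (simp add: sum.delta)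
  finally show ?thesis .
qed

lemma sr_1: "subring_rat R \<Longrightarrow> 1 \<in> R" by (simp add: subring_rat_def)
lemma sr_add: "subring_rat R \<Longrightarrow> x \<in> R \<Longrightarrow> y \<in> R \<Longrightarrow> x + y \<in> R" by (simp add: subring_rat_def)
lemma sr_mult: "subring_rat R \<Longrightarrow> x \<in> R \<Longrightarrow> y \<in> R \<Longrightarrow> x * y \<in> R" by (simp add: subring_rat_def)
lemma sr_neg: "subring_rat R \<Longrightarrow> x \<in> R \<Longrightarrow> - x \<in> R" by (simp add: subring_rat_def)
lemma sr_0: "subring_rat R \<Longrightarrow> 0 \<in> R"
  using sr_add[of R 1 "-1"] sr_1 sr_neg by fastforce
lemma sr_diff: "subring_rat R \<Longrightarrow> x \<in> R \<Longrightarrow> y \<in> R \<Longrightarrow> x - y \<in> R"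
  using sr_add[of R x "-y"] sr_neg by fastforce
lemma sr_nat: "subring_rat R \<Longrightarrow> of_nat k \<in> R"
  by (induction k) (auto simp: sr_0 sr_1 sr_add)
lemma sr_int: "subring_rat R \<Longrightarrow> of_int k \<in> R"
proof (cases "k \<ge> 0")
  case True
  assume "subring_rat R"
  moreover have "rat_of_int k = of_nat (nat k)" using True by simp
  ultimately show ?thesis using sr_nat[of R "nat k"] by metis
next
  case False
  assume "subring_rat R"
  then show ?thesis using sr_nat[of R "nat (-k)"] sr_neg[of R "of_nat (nat (-k))"] False by auto
qed
lemma sr_Ints: "subring_rat R \<Longrightarrow> x \<in> \<int> \<Longrightarrow> x \<in> R"
  using sr_int by (auto elim: Ints_cases)
lemma sr_sum: "subring_rat R \<Longrightarrow> (\<And>i. i \<in> I \<Longrightarrow> f i \<in> R) \<Longrightarrow> (\<Sum>i\<in>I. f i) \<in> R"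
  by (induction I rule: infinite_finite_induct) (auto simp: sr_0 sr_add)
lemma sr_prod: "subring_rat R \<Longrightarrow> (\<And>i. i \<in> I \<Longrightarrow> f i \<in> R) \<Longrightarrow> (\<Prod>i\<in>I. f i) \<in> R"
  by (induction I rule: infinite_finite_induct) (auto simp: sr_1 sr_mult)
lemma sr_pow: "subring_rat R \<Longrightarrow> x \<in> R \<Longrightarrow> x ^ k \<in> R"
  by (induction k) (auto simp: sr_1 sr_mult)
lemma subring_Ints: "subring_rat \<int>"
  by (auto simp: subring_rat_def)

lemma sr_denom:
  assumes "subring_rat R" "r \<in> R" "quotient_of r = (a, b)"
  shows "1 / of_int b \<in> R"
proof -
  have cop: "coprime a b" using quotient_of_coprime[OF assms(3)] .
  have b0: "b > 0" using quotient_of_denom_pos[OF assms(3)] .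
  obtain u v where uv: "u * a + v * b = gcd a b" using bezout_int by blast
  with cop have "u * a + v * b = 1" by simp
  hence e: "(of_int u * of_int a + of_int v * of_int b :: rat) = 1" by (metis of_int_1 of_int_add of_int_mult)
  have rb: "r = of_int a / of_int b" using quotient_of_div[OF assms(3)] .
  have "of_int u * r + of_int v = (of_int u * of_int a + of_int v * of_int b) / (of_int b :: rat)"
    using b0 by (simp add: rb field_simps)
  hence "1 / of_int b = of_int u * r + of_int v" using e by simp
  thus ?thesis using assms(1,2) by (simp add: sr_add sr_mult sr_int)
qed


lemma sum_fun_app: "(\<Sum>i\<in>I. F i) x = (\<Sum>i\<in>I. F i x)"
  by (induction I rule: infinite_finite_induct) auto

lemma ring_algI: "(\<And>x. x \<notin> carrier G \<Longrightarrow> f x = 0) \<Longrightarrow> (\<And>x. f x \<in> A) \<Longrightarrow> f \<in> ring_alg G A"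
  by (simp add: ring_alg_def)
lemma ring_alg_supp: "f \<in> ring_alg G A \<Longrightarrow> x \<notin> carrier G \<Longrightarrow> f x = 0"
  by (simp add: ring_alg_def)
lemma ring_alg_val: "f \<in> ring_alg G A \<Longrightarrow> f x \<in> A"
  by (simp add: ring_alg_def)

lemma galg_ring_alg:
  assumes "subring_rat A" "f \<in> ring_alg G A" "g \<in> ring_alg G A"
  shows "galg_mult G f g \<in> ring_alg G A"
  using assms by (auto simp: galg_mult_def ring_alg_def sr_0 intro!: sr_sum sr_mult)

lemma ring_alg_add: "subring_rat A \<Longrightarrow> f \<in> ring_alg G A \<Longrightarrow> g \<in> ring_alg G A \<Longrightarrow> f + g \<in> ring_alg G A"
  by (auto simp: ring_alg_def sr_add)
lemma ring_alg_smul: "subring_rat A \<Longrightarrow> c \<in> A \<Longrightarrow> f \<in> ring_alg G A \<Longrightarrow> (\<lambda>a. c * f a) \<in> ring_alg G A"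
  by (auto simp: ring_alg_def sr_mult)
lemma aug_ideal_smul: "subring_rat A \<Longrightarrow> c \<in> A \<Longrightarrow> f \<in> aug_ideal G A \<Longrightarrow> (\<lambda>a. c * f a) \<in> aug_ideal G A"
  by (auto simp: aug_ideal_def ring_alg_smul sum_distrib_left[symmetric])
lemma aug_ideal_ring_alg: "aug_ideal G A \<subseteq> ring_alg G A"
  by (auto simp: aug_ideal_def)

lemma ideal_prod_add:
  assumes "h1 \<in> ideal_prod G X Y" "h2 \<in> ideal_prod G X Y"
  shows "h1 + h2 \<in> ideal_prod G X Y"
  using assms(1)
proof (induction rule: ideal_prod.induct)
  case zero
  then show ?case using assms(2) by (simp add: fun_eq_iff[symmetric])
next
  case (step f g h)
  have "(\<lambda>x. galg_mult G f g x + h x) + h2 = (\<lambda>x. galg_mult G f g x + (h + h2) x)"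
    by (simp add: fun_eq_iff add.assoc)
  then show ?case using step by (simp add: ideal_prod.step)
qed

lemma ideal_prod_smul:
  assumes "\<And>f. f \<in> X \<Longrightarrow> (\<lambda>a. c * f a) \<in> X" "h \<in> ideal_prod G X Y"
  shows "(\<lambda>a. c * h a) \<in> ideal_prod G X Y"
  using assms(2)
proof (induction rule: ideal_prod.induct)
  case zero
  then show ?case by (simp add: ideal_prod.zero)
next
  case (step f g h)
  have "(\<lambda>a. c * (galg_mult G f g a + h a)) = (\<lambda>x. galg_mult G (\<lambda>a. c * f a) g x + (\<lambda>a. c * h a) x)"
    by (simp add: galg_mult_smul_left algebra_simps)
  then show ?case using step assms(1) by (simp add: ideal_prod.step)
qed

lemma ideal_prod_ring_alg:
  assumes "subring_rat A" "X \<subseteq> ring_alg G A" "Y \<subseteq> ring_alg G A"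
  shows "ideal_prod G X Y \<subseteq> ring_alg G A"
proof
  fix h assume "h \<in> ideal_prod G X Y"
  then show "h \<in> ring_alg G A"
  proof (induction rule: ideal_prod.induct)
    case zero
    then show ?case using assms(1) by (simp add: ring_alg_def sr_0)
  next
    case (step f g h)
    have "galg_mult G f g \<in> ring_alg G A" using step assms galg_ring_alg by blast
    from ring_alg_add[OF assms(1) this step.IH] show ?case by (simp add: plus_fun_def)
  qed
qed

lemma ideal_prod_aug:
  assumes "group G" "subring_rat A" "X \<subseteq> aug_ideal G A" "Y \<subseteq> ring_alg G A"
  shows "ideal_prod G X Y \<subseteq> aug_ideal G A"
proof
  fix h assume "h \<in> ideal_prod G X Y"
  then show "h \<in> aug_ideal G A"
  proof (induction rule: ideal_prod.induct)
    case zero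
    then show ?case using assms(2) by (simp add: aug_ideal_def ring_alg_def sr_0)
  next
    case (step f g h)
    have fa: "f \<in> ring_alg G A" "(\<Sum>x\<in>carrier G. f x) = 0" using step assms(3) by (auto simp: aug_ideal_def)
    have "galg_mult G f g \<in> ring_alg G A" using step assms fa galg_ring_alg by blast
    from ring_alg_add[OF assms(2) this] step.IH have r: "(\<lambda>x. galg_mult G f g x + h x) \<in> ring_alg G A"
      by (auto simp: plus_fun_def aug_ideal_def)
    have "(\<Sum>x\<in>carrier G. galg_mult G f g x + h x) = 0"
      using step.IH fa galg_mult_sum[OF assms(1)] by (simp add: sum.distrib aug_ideal_def)
    then show ?case using r by (simp add: aug_ideal_def)
  qed
qed

lemma ideal_prod_mono:
  assumes "X \<subseteq> X'" "Y \<subseteq> Y'"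
  shows "ideal_prod G X Y \<subseteq> ideal_prod G X' Y'"
proof
  fix h assume "h \<in> ideal_prod G X Y"
  then show "h \<in> ideal_prod G X' Y'"
    by (induction rule: ideal_prod.induct) (use assms in \<open>auto intro: ideal_prod.zero ideal_prod.step\<close>)
qed

lemma ideal_prod_sum:
  assumes "finite I" "\<And>i. i \<in> I \<Longrightarrow> f i \<in> X" "g \<in> Y"
  shows "(\<Sum>i\<in>I. galg_mult G (f i) g) \<in> ideal_prod G X Y"
  using assms
proof (induction I rule: finite_induct)
  case empty
  then show ?case using ideal_prod.zero by (simp add: zero_fun_def)
next
  case (insert x F)
  have "(\<Sum>i\<in>insert x F. galg_mult G (f i) g) = (\<lambda>a. galg_mult G (f x) g a + (\<Sum>i\<in>F. galg_mult G (f i) g) a)"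
    using insert by (simp add: fun_eq_iff)
  then show ?case using insert by (simp add: ideal_prod.step)
qed

lemma aug_pow_ring_alg: "subring_rat A \<Longrightarrow> aug_pow G A k \<subseteq> ring_alg G A"
proof (induction k)
  case 0 then show ?case by simp
next
  case (Suc k) then show ?case using ideal_prod_ring_alg[OF Suc.prems aug_ideal_ring_alg Suc.IH] by simp
qed

lemma aug_pow_add: "subring_rat A \<Longrightarrow> f \<in> aug_pow G A k \<Longrightarrow> g \<in> aug_pow G A k \<Longrightarrow> f + g \<in> aug_pow G A k"
proof (cases k)
  case 0 assume "subring_rat A" "f \<in> aug_pow G A k" "g \<in> aug_pow G A k"
  then show ?thesis using 0 ring_alg_add by simp
next
  case (Suc m) assume "subring_rat A" "f \<in> aug_pow G A k" "g \<in> aug_pow G A k"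
  then show ?thesis using Suc ideal_prod_add by simp
qed

lemma aug_pow_smul: "subring_rat A \<Longrightarrow> c \<in> A \<Longrightarrow> f \<in> aug_pow G A k \<Longrightarrow> (\<lambda>a. c * f a) \<in> aug_pow G A k"
proof (cases k)
  case 0 assume "subring_rat A" "c \<in> A" "f \<in> aug_pow G A k"
  then show ?thesis using 0 ring_alg_smul by simp
next
  case (Suc m) assume a: "subring_rat A" "c \<in> A" "f \<in> aug_pow G A k"
  then show ?thesis using Suc ideal_prod_smul[OF aug_ideal_smul[OF a(1,2)]] by simp
qed

lemma aug_pow_zero: "subring_rat A \<Longrightarrow> (0::'a \<Rightarrow> rat) \<in> aug_pow G A k"
proof (cases k)
  case 0 assume "subring_rat A"
  then show ?thesis using 0 by (simp add: ring_alg_def sr_0)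
next
  case (Suc m) then show ?thesis using ideal_prod.zero by (simp add: zero_fun_def)
qed

lemma aug_pow_Suc_sub: "subring_rat A \<Longrightarrow> aug_pow G A (Suc k) \<subseteq> aug_pow G A k"
proof (induction k)
  case 0
  then show ?case using ideal_prod_ring_alg[OF 0 aug_ideal_ring_alg subset_refl] by simp
next
  case (Suc k)
  then show ?case using ideal_prod_mono[of "aug_ideal G A" "aug_ideal G A" "aug_pow G A (Suc k)" "aug_pow G A k" G]
    by simp
qed

lemma aug_pow_aug: "group G \<Longrightarrow> subring_rat A \<Longrightarrow> k \<ge> 1 \<Longrightarrow> aug_pow G A k \<subseteq> aug_ideal G A"
proof (cases k)
  case 0 assume "k \<ge> 1" then show ?thesis using 0 by simp
next
  case (Suc m) assume a: "group G" "subring_rat A"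
  then show ?thesis using Suc ideal_prod_aug[OF a subset_refl aug_pow_ring_alg[OF a(2)]] by simp
qed

lemma aug_pow_mono: "A \<subseteq> A' \<Longrightarrow> aug_pow G A k \<subseteq> aug_pow G A' k"
proof (induction k)
  case 0
  then show ?case by (auto simp: ring_alg_def)
next
  case (Suc k)
  have "aug_ideal G A \<subseteq> aug_ideal G A'" using Suc.prems by (auto simp: aug_ideal_def ring_alg_def)
  then show ?case using Suc ideal_prod_mono by simp
qed


lemma galg_mult_diff_left: "galg_mult G (f - f') g = galg_mult G f g - galg_mult G f' g"
  by (auto simp: galg_mult_def fun_eq_iff sum_subtractf algebra_simps)

lemma card_mult_aug_pow:
  assumes G: "group G" "finite (carrier G)" and A: "subring_rat A" and k: "k \<ge> 1"
    and h: "h \<in> aug_pow G A k"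
  shows "(\<lambda>a. of_nat (card (carrier G)) * h a) \<in> aug_pow G A (Suc k)"
proof -
  define f where "f x = dlt \<one>\<^bsub>G\<^esub> - dlt x" for x
  have one: "\<one>\<^bsub>G\<^esub> \<in> carrier G" using monoid.one_closed[OF group.is_monoid[OF G(1)]] .
  have fI: "f x \<in> aug_ideal G A" if x: "x \<in> carrier G" for x
  proof -
    have "f x \<in> ring_alg G A"
      using x one A by (auto simp: ring_alg_def f_def dlt_def sr_0 sr_1 sr_neg)
    moreover have "(\<Sum>a\<in>carrier G. f x a) = 0"
      using x one G by (simp add: f_def sum_subtractf dlt_def sum.delta)
    ultimately show ?thesis by (simp add: aug_ideal_def)
  qed
  have hr: "h \<in> aug_ideal G A" using aug_pow_aug[OF G(1) A k] h by blast
  have hsum: "(\<Sum>a\<in>carrier G. h a) = 0" using hr by (simp add: aug_ideal_def)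
  have hs: "h a = 0" if "a \<notin> carrier G" for a using hr that by (simp add: aug_ideal_def ring_alg_def)
  have mem: "(\<Sum>x\<in>carrier G. galg_mult G (f x) h) \<in> ideal_prod G (aug_ideal G A) (aug_pow G A k)"
    by (rule ideal_prod_sum) (use G(2) fI h in auto)
  have "(\<Sum>x\<in>carrier G. galg_mult G (f x) h) = (\<lambda>a. of_nat (card (carrier G)) * h a)"
  proof
    fix a
    show "(\<Sum>x\<in>carrier G. galg_mult G (f x) h) a = of_nat (card (carrier G)) * h a"
    proof (cases "a \<in> carrier G")
      case True
      have "(\<Sum>x\<in>carrier G. galg_mult G (f x) h) a = (\<Sum>x\<in>carrier G. galg_mult G (f x) h a)"
        by (simp add: sum_fun_app)
      also have "\<dots> = (\<Sum>x\<in>carrier G. h a - h (a \<otimes>\<^bsub>G\<^esub> inv\<^bsub>G\<^esub> x))"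
        by (rule sum.cong) (use True G one in \<open>auto simp: f_def galg_mult_diff_left galg_mult_dlt
           monoid.inv_one[OF group.is_monoid[OF G(1)]] monoid.r_one[OF group.is_monoid[OF G(1)]]\<close>)
      also have "\<dots> = of_nat (card (carrier G)) * h a - (\<Sum>x\<in>carrier G. h (a \<otimes>\<^bsub>G\<^esub> inv\<^bsub>G\<^esub> x))"
        by (simp add: sum_subtractf)
      also have "(\<Sum>x\<in>carrier G. h (a \<otimes>\<^bsub>G\<^esub> inv\<^bsub>G\<^esub> x)) = 0"
        using group.sum_shift[OF G(1) True, of h] hsum by simp
      finally show ?thesis by simp
    next
      case False
      then show ?thesis by (simp add: sum_fun_app galg_mult_supp hs)
    qed
  qed
  with mem show ?thesis by simp
qed

definition Tset :: "rat set \<Rightarrow> nat set" where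
  "Tset R = {D. D > 0 \<and> 1 / of_nat D \<in> R}"

lemma Tset_1: "subring_rat R \<Longrightarrow> 1 \<in> Tset R"
  by (simp add: Tset_def sr_1)

lemma Tset_mult: "subring_rat R \<Longrightarrow> D \<in> Tset R \<Longrightarrow> E \<in> Tset R \<Longrightarrow> D * E \<in> Tset R"
  using sr_mult[of R "1 / of_nat D" "1 / of_nat E"] by (simp add: Tset_def)

lemma loc_vals:
  assumes R: "subring_rat R" and B: "finite B" and f: "\<And>x. x \<in> B \<Longrightarrow> f x \<in> R"
  shows "\<exists>D\<in>Tset R. \<forall>x\<in>B. of_nat D * f x \<in> \<int>"
  using B f
proof (induction B rule: finite_induct)
  case empty
  then show ?case using Tset_1[OF R] by blast
next
  case (insert y B)
  then obtain D where D: "D \<in> Tset R" "\<forall>x\<in>B. of_nat D * f x \<in> \<int>" by auto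
  obtain a b where ab: "quotient_of (f y) = (a, b)" by (cases "quotient_of (f y)")
  have b0: "b > 0" using quotient_of_denom_pos[OF ab] .
  have bR: "1 / of_int b \<in> R" using sr_denom[OF R _ ab] insert by auto
  have bT: "nat b \<in> Tset R" using b0 bR by (simp add: Tset_def)
  have fy: "of_int b * f y = of_int a" using quotient_of_div[OF ab] b0 by simp
  have "\<forall>x\<in>insert y B. of_nat (D * nat b) * f x \<in> \<int>"
  proof
    fix x assume "x \<in> insert y B"
    then show "of_nat (D * nat b) * f x \<in> \<int>"
    proof
      assume "x = y"
      have nb: "(of_nat (nat b) :: rat) = of_int b" using b0 by simp
      have "of_nat (D * nat b) * f x = of_nat D * (of_int b * f y)"
        using \<open>x = y\<close> by (simp only: of_nat_mult nb mult.assoc)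
      then have "of_nat (D * nat b) * f x = of_nat D * of_int a"
        by (simp only: fy)
      moreover have "(of_nat D * of_int a :: rat) \<in> \<int>" by (intro Ints_mult) auto
      ultimately show ?thesis by (simp only:)
    next
      assume "x \<in> B"
      then have "of_nat D * f x \<in> \<int>" using D by auto
      moreover have "of_nat (D * nat b) * f x = of_nat (nat b) * (of_nat D * f x)" by simp
      ultimately show ?thesis by (metis Ints_mult Ints_of_nat)
    qed
  qed
  then show ?case using Tset_mult[OF R D(1) bT] by blast
qed

lemma loc_ring_alg:
  assumes R: "subring_rat R" and fin: "finite (carrier G)" and f: "f \<in> ring_alg G R"
  shows "\<exists>D\<in>Tset R. (\<lambda>a. of_nat D * f a) \<in> ring_alg G \<int>"
proof -
  obtain D where D: "D \<in> Tset R" "\<forall>x\<in>carrier G. of_nat D * f x \<in> \<int>"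
    using loc_vals[OF R fin, of f] f by (auto simp: ring_alg_def)
  have "(\<lambda>a. of_nat D * f a) \<in> ring_alg G \<int>"
    using D(2) f by (auto simp: ring_alg_def)
  then show ?thesis using D(1) by blast
qed

lemma loc_aug:
  assumes R: "subring_rat R" and fin: "finite (carrier G)" and f: "f \<in> aug_ideal G R"
  shows "\<exists>D\<in>Tset R. (\<lambda>a. of_nat D * f a) \<in> aug_ideal G \<int>"
proof -
  obtain D where D: "D \<in> Tset R" "(\<lambda>a. of_nat D * f a) \<in> ring_alg G \<int>"
    using loc_ring_alg[OF R fin] f by (auto simp: aug_ideal_def)
  moreover have "(\<Sum>a\<in>carrier G. of_nat D * f a) = 0"
    using f by (simp add: aug_ideal_def sum_distrib_left[symmetric])
  ultimately show ?thesis by (auto simp: aug_ideal_def)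
qed

lemma loc_aug_pow:
  assumes R: "subring_rat R" and fin: "finite (carrier G)"
  shows "x \<in> aug_pow G R k \<Longrightarrow> \<exists>D\<in>Tset R. (\<lambda>a. of_nat D * x a) \<in> aug_pow G \<int> k"
proof (induction k arbitrary: x)
  case 0
  then show ?case using loc_ring_alg[OF R fin] by simp
next
  case (Suc k)
  from Suc.prems have "x \<in> ideal_prod G (aug_ideal G R) (aug_pow G R k)" by simp
  then show ?case
  proof (induction rule: ideal_prod.induct)
    case zero
    then show ?case using Tset_1[OF R] ideal_prod.zero by fastforce
  next
    case (step f g h)
    obtain D1 where D1: "D1 \<in> Tset R" "(\<lambda>a. of_nat D1 * f a) \<in> aug_ideal G \<int>"
      using loc_aug[OF R fin step(1)] by blast
    obtain D2 where D2: "D2 \<in> Tset R" "(\<lambda>a. of_nat D2 * g a) \<in> aug_pow G \<int> k"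
      using Suc.IH[OF step(2)] by blast
    obtain D3 where D3: "D3 \<in> Tset R" "(\<lambda>a. of_nat D3 * h a) \<in> aug_pow G \<int> (Suc k)"
      using step(4) by blast
    define P where "P = galg_mult G (\<lambda>a. of_nat D1 * f a) (\<lambda>a. of_nat D2 * g a)"
    have P: "(\<lambda>a. P a + 0) \<in> aug_pow G \<int> (Suc k)"
      unfolding P_def using D1(2) D2(2) ideal_prod.step[OF _ _ ideal_prod.zero] by simp
    have P': "(\<lambda>a. of_rat (of_nat D3) * P a) \<in> aug_pow G \<int> (Suc k)"
      using aug_pow_smul[OF subring_Ints _ P, of "of_nat D3"] by simp
    have H': "(\<lambda>a. of_nat (D1 * D2) * (of_nat D3 * h a)) \<in> aug_pow G \<int> (Suc k)"
      using aug_pow_smul[OF subring_Ints _ D3(2), of "of_nat (D1 * D2)"] by simp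
    have eq: "(\<lambda>a. of_nat (D1 * D2 * D3) * (galg_mult G f g a + h a))
        = (\<lambda>a. of_rat (of_nat D3) * P a) + (\<lambda>a. of_nat (D1 * D2) * (of_nat D3 * h a))"
      by (simp add: P_def galg_mult_smul_left galg_mult_smul_right fun_eq_iff algebra_simps)
    have "(\<lambda>a. of_nat (D1 * D2 * D3) * (galg_mult G f g a + h a)) \<in> aug_pow G \<int> (Suc k)"
      unfolding eq by (rule aug_pow_add[OF subring_Ints P' H'])
    moreover have "D1 * D2 * D3 \<in> Tset R" using Tset_mult[OF R] D1(1) D2(1) D3(1) by blast
    ultimately show ?case by blast
  qed
qed


definition sc :: "rat \<Rightarrow> ('a \<Rightarrow> rat) \<Rightarrow> 'a \<Rightarrow> rat" where
  "sc c f = (\<lambda>a. c * f a)"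

lemma sc_apply [simp]: "sc c f a = c * f a" by (simp add: sc_def)
lemma sc_add: "sc c (f + g) = sc c f + sc c g" by (simp add: fun_eq_iff algebra_simps)
lemma sc_diff: "sc c (f - g) = sc c f - sc c g" by (simp add: fun_eq_iff algebra_simps)
lemma sc_sc: "sc a (sc b f) = sc (a * b) f" by (simp add: fun_eq_iff algebra_simps)
lemma sc_1 [simp]: "sc 1 f = f" by (simp add: fun_eq_iff)
lemma sc_0 [simp]: "sc 0 f = 0" by (simp add: fun_eq_iff)
lemma sc_zero [simp]: "sc c 0 = 0" by (simp add: fun_eq_iff)
lemma sc_ladd: "sc (a + b) f = sc a f + sc b f" by (simp add: fun_eq_iff algebra_simps)
lemma sc_ldiff: "sc (a - b) f = sc a f - sc b f" by (simp add: fun_eq_iff algebra_simps)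
lemma sc_sum: "sc c (\<Sum>i\<in>I. f i) = (\<Sum>i\<in>I. sc c (f i))"
  by (simp add: fun_eq_iff sum_fun_app sum_distrib_left)
lemma sc_lsum: "sc (\<Sum>i\<in>I. c i) f = (\<Sum>i\<in>I. sc (c i) f)"
  by (simp add: fun_eq_iff sum_fun_app sum_distrib_right)
lemma sc_neg: "sc (-1) f = - f" by (simp add: fun_eq_iff)

locale zmod =
  fixes J :: "('a \<Rightarrow> rat) set"
  assumes z0: "0 \<in> J" and zadd: "x \<in> J \<Longrightarrow> y \<in> J \<Longrightarrow> x + y \<in> J"
    and zsc: "x \<in> J \<Longrightarrow> sc (of_int c) x \<in> J"
begin

lemma zneg: "x \<in> J \<Longrightarrow> - x \<in> J"
  using zsc[of x "-1"] by (simp add: sc_neg)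

lemma zdiff: "x \<in> J \<Longrightarrow> y \<in> J \<Longrightarrow> x - y \<in> J"
  using zadd[of x "- y"] zneg by simp

lemma zsum: "(\<And>i. i \<in> I \<Longrightarrow> f i \<in> J) \<Longrightarrow> (\<Sum>i\<in>I. f i) \<in> J"
  by (induction I rule: infinite_finite_induct) (auto simp: z0 zadd)

lemma zlin: "sc (of_int a) x \<in> J \<Longrightarrow> sc (of_int b) x \<in> J \<Longrightarrow> sc (of_int (u * a + v * b)) x \<in> J"
proof -
  assume a: "sc (of_int a) x \<in> J" and b: "sc (of_int b) x \<in> J"
  have "sc (of_int (u * a + v * b)) x = sc (of_int u) (sc (of_int a) x) + sc (of_int v) (sc (of_int b) x)"
    by (simp add: sc_sc sc_ladd)
  then show ?thesis using zadd zsc a b by simp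
qed

lemma zgcd: "sc (of_int a) x \<in> J \<Longrightarrow> sc (of_int b) x \<in> J \<Longrightarrow> sc (of_int (gcd a b)) x \<in> J"
proof -
  assume a: "sc (of_int a) x \<in> J" and b: "sc (of_int b) x \<in> J"
  obtain u v where "u * a + v * b = gcd a b" using bezout_int by blast
  then show ?thesis using zlin[OF a b, of u v] by simp
qed

lemma zcop: "coprime a b \<Longrightarrow> sc (of_int a) x \<in> J \<Longrightarrow> sc (of_int b) x \<in> J \<Longrightarrow> x \<in> J"
  using zgcd[of a x b] by simp

lemma zdvd: "a dvd b \<Longrightarrow> sc (of_int a) x \<in> J \<Longrightarrow> sc (of_int b) x \<in> J"
proof -
  assume "a dvd b" "sc (of_int a) x \<in> J"
  then obtain c where "b = a * c" by (auto elim: dvdE)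
  then have "sc (of_int b) x = sc (of_int c) (sc (of_int a) x)" by (simp add: sc_sc mult.commute)
  then show ?thesis using zsc \<open>sc (of_int a) x \<in> J\<close> by simp
qed

lemma qcoset_alt: "qcoset J x = (\<lambda>j. x + j) ` J"
  by (auto simp: qcoset_def plus_fun_def)

lemma qcoset_eq: "qcoset J x = qcoset J y \<longleftrightarrow> x - y \<in> J"
proof
  assume "qcoset J x = qcoset J y"
  then have "x \<in> (\<lambda>j. y + j) ` J" using z0 by (auto simp: qcoset_alt)
  then obtain j where "j \<in> J" "x = y + j" by auto
  then show "x - y \<in> J" by simp
next
  assume d: "x - y \<in> J"
  show "qcoset J x = qcoset J y"
  proof (auto simp: qcoset_alt)
    fix j assume "j \<in> J"
    then have "x + j = y + ((x - y) + j)" "(x - y) + j \<in> J" using d zadd by auto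
    then show "x + j \<in> (+) y ` J" by blast
  next
    fix j assume "j \<in> J"
    then have "y + j = x + (j - (x - y))" "j - (x - y) \<in> J" using d zdiff by auto
    then show "y + j \<in> (+) x ` J" by blast
  qed
qed

lemma qcoset_self: "x \<in> qcoset J x"
  using z0 by (auto simp: qcoset_alt intro: image_eqI[of _ _ 0])

lemma qcoset_zero: "qcoset J 0 = J"
  by (simp add: qcoset_alt)

lemma qadd_qcoset: "qadd (qcoset J x) (qcoset J y) = qcoset J (x + y)"
proof -
  have "qadd (qcoset J x) (qcoset J y) = {u + v | u v. u \<in> qcoset J x \<and> v \<in> qcoset J y}"
    by (simp add: qadd_def plus_fun_def)
  also have "\<dots> = qcoset J (x + y)"
  proof (auto simp: qcoset_alt)
    fix j1 j2 assume "j1 \<in> J" "j2 \<in> J"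
    then have "x + j1 + (y + j2) = x + y + (j1 + j2)" "j1 + j2 \<in> J" using zadd by (auto simp: algebra_simps)
    then show "x + j1 + (y + j2) \<in> (+) (x + y) ` J" by blast
  next
    fix j assume "j \<in> J"
    then have "x + y + j = (x + j) + (y + 0)" by (simp add: algebra_simps)
    then show "\<exists>u v. x + y + j = u + v \<and> u \<in> (+) x ` J \<and> v \<in> (+) y ` J"
      using \<open>j \<in> J\<close> z0 by blast
  qed
  finally show ?thesis .
qed

lemma qsmul_qcoset:
  assumes c: "\<And>j. j \<in> J \<Longrightarrow> sc c j \<in> J"
  shows "qsmul J c (qcoset J x) = qcoset J (sc c x)"
proof -
  have "qsmul J c (qcoset J x) = {sc c u + j | u j. u \<in> qcoset J x \<and> j \<in> J}"
    by (simp add: qsmul_def plus_fun_def sc_def)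
  also have "\<dots> = qcoset J (sc c x)"
  proof (auto simp: qcoset_alt)
    fix j1 j2 assume "j1 \<in> J" "j2 \<in> J"
    then have "sc c (x + j1) + j2 = sc c x + (sc c j1 + j2)" "sc c j1 + j2 \<in> J" using zadd c
      by (auto simp: sc_add algebra_simps)
    then show "sc c (x + j1) + j2 \<in> (+) (sc c x) ` J" by blast
  next
    fix j assume "j \<in> J"
    then have "sc c x + j = sc c (x + 0) + j" by simp
    then show "\<exists>u j'. sc c x + j = sc c u + j' \<and> u \<in> (+) x ` J \<and> j' \<in> J"
      using \<open>j \<in> J\<close> z0 by blast
  qed
  finally show ?thesis .
qed

end

lemma aug_pow_zmod: "subring_rat A \<Longrightarrow> zmod (aug_pow G A k)"
  by (unfold_locales) (auto simp: aug_pow_zero aug_pow_add sc_def intro!: aug_pow_smul sr_int)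

lemma aug_pow_sc: "subring_rat A \<Longrightarrow> c \<in> A \<Longrightarrow> f \<in> aug_pow G A k \<Longrightarrow> sc c f \<in> aug_pow G A k"
  unfolding sc_def by (rule aug_pow_smul)


locale mainctx =
  fixes G :: "('a, 'b) monoid_scheme" and R :: "rat set" and n :: nat and S :: "nat set"
  assumes grp: "group G" and fin: "finite (carrier G)" and sr: "subring_rat R" and n1: "n \<ge> 1"
    and Sdef: "S = {l. prime l \<and> l dvd card (carrier G) \<and> 1 / of_nat l \<notin> R}"
begin

abbreviation "NN \<equiv> card (carrier G)"
abbreviation "J \<equiv> aug_pow G \<int> (Suc n)"
abbreviation "M \<equiv> aug_pow G \<int> n"
abbreviation "JR \<equiv> aug_pow G R (Suc n)"
abbreviation "MR \<equiv> aug_pow G R n"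

definition q :: "nat \<Rightarrow> nat" where "q l = l ^ multiplicity l NN"
abbreviation "PP \<equiv> prime_factors NN"

lemma NN_pos: "NN > 0"
proof -
  have "\<one>\<^bsub>G\<^esub> \<in> carrier G" using monoid.one_closed[OF group.is_monoid[OF grp]] .
  then show ?thesis using fin by (auto simp: card_gt_0_iff)
qed

lemma zJ: "zmod J" by (rule aug_pow_zmod[OF subring_Ints])
lemma zM: "zmod M" by (rule aug_pow_zmod[OF subring_Ints])
lemma zJR: "zmod JR" by (rule aug_pow_zmod[OF sr])
lemma zMR: "zmod MR" by (rule aug_pow_zmod[OF sr])

lemma IntsR: "\<int> \<subseteq> R" using sr_Ints[OF sr] by blast
lemma J_M: "J \<subseteq> M" by (rule aug_pow_Suc_sub[OF subring_Ints])
lemma J_JR: "J \<subseteq> JR" by (rule aug_pow_mono[OF IntsR])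
lemma M_MR: "M \<subseteq> MR" by (rule aug_pow_mono[OF IntsR])

lemma NN_kill: "x \<in> M \<Longrightarrow> sc (of_int (int NN)) x \<in> J"
  using card_mult_aug_pow[OF grp fin subring_Ints n1, of x] by (simp add: sc_def)

lemma S_sub: "S \<subseteq> PP" using NN_pos by (auto simp: Sdef prime_factors_dvd)
lemma fin_PP: "finite PP" by simp
lemma fin_S: "finite S" using S_sub finite_subset by blast
lemma S_prime: "l \<in> S \<Longrightarrow> prime l" by (simp add: Sdef)
lemma PP_prime: "p \<in> PP \<Longrightarrow> prime p" by auto
lemma PP_notS: "p \<in> PP \<Longrightarrow> p \<notin> S \<Longrightarrow> 1 / of_nat p \<in> R"
  using NN_pos by (auto simp: Sdef prime_factors_dvd)

lemma q_pos: "prime l \<Longrightarrow> q l > 0" by (simp add: q_def prime_gt_0_nat)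

lemma T_coprime:
  assumes D: "D \<in> Tset R" and l: "l \<in> S"
  shows "coprime (int D) (int (q l))"
proof -
  have pl: "prime l" using l by (simp add: Sdef)
  have "\<not> l dvd D"
  proof
    assume "l dvd D"
    then obtain m where m: "D = l * m" by (auto elim: dvdE)
    have D0: "D > 0" using D by (simp add: Tset_def)
    then have "m > 0" "l > 0" using m by auto
    then have "1 / (of_nat l :: rat) = of_nat m * (1 / of_nat D)" using m by (simp add: field_simps)
    moreover have hD: "1 / of_nat D \<in> R" using D by (simp add: Tset_def)
    have "of_nat m * (1 / of_nat D) \<in> R" using sr_mult[OF sr sr_nat[OF sr] hD] .
    ultimately show False using l by (simp add: Sdef)
  qed
  then have "coprime l D" using prime_imp_coprime[OF pl] by blast
  then have "coprime D (q l)" by (simp add: q_def coprime_commute)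
  then show ?thesis by simp
qed

lemma q_coprime: "prime l \<Longrightarrow> prime l' \<Longrightarrow> l \<noteq> l' \<Longrightarrow> coprime (q l) (q l')"
  using primes_coprime[of l l'] by (simp add: q_def)

lemma prod_dvd:
  assumes "finite A" "\<And>l. l \<in> A \<Longrightarrow> prime l" "\<And>l. l \<in> A \<Longrightarrow> int (q l) dvd K"
  shows "int (\<Prod>l\<in>A. q l) dvd K"
  using assms
proof (induction A rule: finite_induct)
  case empty then show ?case by simp
next
  case (insert x A)
  have "coprime (q x) (\<Prod>l\<in>A. q l)"
  proof (intro prod_coprime_right)
    fix l assume "l \<in> A"
    then show "coprime (q x) (q l)" proof -
      have "prime x" "prime l" using insert.prems(1) \<open>l \<in> A\<close> by auto
      moreover have "x \<noteq> l" using insert.hyps(2) \<open>l \<in> A\<close> by auto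
      ultimately show ?thesis using q_coprime by blast
    qed
  qed
  then have c: "coprime (int (q x)) (int (\<Prod>l\<in>A. q l))" by (simp only: coprime_int_iff)
  have i: "int (\<Prod>l\<in>insert x A. q l) = int (q x) * int (\<Prod>l\<in>A. q l)" using insert.hyps by simp
  have "int (\<Prod>l\<in>A. q l) dvd K" using insert.prems by (intro insert.IH) auto
  moreover have "int (q x) dvd K" using insert.prems by simp
  ultimately show ?case unfolding i using c by (intro divides_mult)
qed

lemma q_dvd_NN: "q l dvd NN" by (simp add: q_def multiplicity_dvd)

lemma gcd_dvd_q:
  assumes "prime l"
  shows "gcd (l ^ k) NN dvd q l"
proof -
  have "gcd (l ^ k) NN dvd l ^ k" by simp
  then obtain i where i: "i \<le> k" "gcd (l ^ k) NN = l ^ i" using divides_primepow_nat[OF assms] by blast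
  have "l ^ i dvd NN" using i(2) by (metis gcd_dvd2)
  then have "i \<le> multiplicity l NN"
  proof -
    have "\<not> is_unit l" using assms not_prime_unit by blast
    moreover have "NN \<noteq> 0" using NN_pos by simp
    ultimately show ?thesis using power_dvd_iff_le_multiplicity \<open>l ^ i dvd NN\<close> by blast
  qed
  then show ?thesis using i(2) by (simp add: q_def le_imp_power_dvd)
qed

lemma Qn_Z: "Qn G \<int> n = qcoset J ` M" by (simp add: Qn_def)
lemma Qn_R: "Qn G R n = qcoset JR ` MR" by (simp add: Qn_def)

lemma SylQ_iff:
  assumes l: "prime l"
  shows "X \<in> SylQ G n l \<longleftrightarrow> (\<exists>x\<in>M. X = qcoset J x \<and> sc (of_nat (q l)) x \<in> J)"
proof
  assume X: "X \<in> SylQ G n l"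
  then obtain x k where x: "x \<in> M" "X = qcoset J x" and k: "qsmul J (of_nat (l ^ k)) X = J"
    by (auto simp: SylQ_def Qn_def)
  have cl: "\<And>j. j \<in> J \<Longrightarrow> sc (of_nat (l ^ k)) j \<in> J" using zmod.zsc[OF zJ, of _ "int (l ^ k)"] by simp
  have "qcoset J (sc (of_nat (l ^ k)) x) = qcoset J 0"
    using k x zmod.qsmul_qcoset[OF zJ cl] zmod.qcoset_zero[OF zJ] by simp
  then have a: "sc (of_int (int (l ^ k))) x \<in> J" using zmod.qcoset_eq[OF zJ] by simp
  have b: "sc (of_int (int NN)) x \<in> J" using NN_kill x(1) .
  have "sc (of_int (gcd (int (l ^ k)) (int NN))) x \<in> J" using zmod.zgcd[OF zJ a b] .
  then have "sc (of_int (int (gcd (l ^ k) NN))) x \<in> J" by (simp only: gcd_int_int_eq)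
  moreover have "int (gcd (l ^ k) NN) dvd int (q l)" using gcd_dvd_q[OF l] by simp
  ultimately have "sc (of_int (int (q l))) x \<in> J" using zmod.zdvd[OF zJ] by blast
  then show "\<exists>x\<in>M. X = qcoset J x \<and> sc (of_nat (q l)) x \<in> J" using x by auto
next
  assume "\<exists>x\<in>M. X = qcoset J x \<and> sc (of_nat (q l)) x \<in> J"
  then obtain x where x: "x \<in> M" "X = qcoset J x" "sc (of_nat (q l)) x \<in> J" by blast
  have cl: "\<And>j. j \<in> J \<Longrightarrow> sc (of_nat (l ^ multiplicity l NN)) j \<in> J"
    using zmod.zsc[OF zJ, of _ "int (l ^ multiplicity l NN)"] by simp
  have "qsmul J (of_nat (l ^ multiplicity l NN)) X = qcoset J (sc (of_nat (q l)) x)"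
    using zmod.qsmul_qcoset[OF zJ cl] x by (simp add: q_def)
  also have "\<dots> = qcoset J 0" using zmod.qcoset_eq[OF zJ] x(3) by simp
  also have "\<dots> = J" using zmod.qcoset_zero[OF zJ] .
  finally have "qsmul J (of_nat (l ^ multiplicity l NN)) X = J" .
  moreover have "X \<in> Qn G \<int> n" using x by (simp add: Qn_def)
  ultimately show "X \<in> SylQ G n l" by (auto simp: SylQ_def)
qed

definition rep :: "('a \<Rightarrow> rat) set \<Rightarrow> 'a \<Rightarrow> rat" where
  "rep X = (SOME x. x \<in> M \<and> X = qcoset J x)"

lemma rep_ok: "X \<in> qcoset J ` M \<Longrightarrow> rep X \<in> M \<and> X = qcoset J (rep X)"
proof -
  assume "X \<in> qcoset J ` M"
  then have "\<exists>x. x \<in> M \<and> X = qcoset J x" by blast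
  then show ?thesis unfolding rep_def by (rule someI_ex)
qed

lemma rep_coset: "x \<in> M \<Longrightarrow> rep (qcoset J x) - x \<in> J"
  using rep_ok[of "qcoset J x"] zmod.qcoset_eq[OF zJ] zmod.zneg[OF zJ, of "x - rep (qcoset J x)"] by auto

lemma DS_comp:
  assumes F: "F \<in> DS G n S" and l: "l \<in> S"
  shows "rep (F l) \<in> M" "F l = qcoset J (rep (F l))" "sc (of_nat (q l)) (rep (F l)) \<in> J"
proof -
  have "F l \<in> SylQ G n l" using F l by (simp add: DS_def)
  then obtain x where x: "x \<in> M" "F l = qcoset J x" "sc (of_nat (q l)) x \<in> J"
    using SylQ_iff S_prime[OF l] by blast
  have r: "rep (F l) \<in> M" "F l = qcoset J (rep (F l))" using rep_ok[of "F l"] x by auto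
  then show "rep (F l) \<in> M" "F l = qcoset J (rep (F l))" by auto
  have "rep (F l) - x \<in> J" using rep_coset x by simp
  then have "sc (of_nat (q l)) (rep (F l) - x) \<in> J" using zmod.zsc[OF zJ, of _ "int (q l)"] by simp
  then have "sc (of_nat (q l)) (rep (F l) - x) + sc (of_nat (q l)) x \<in> J" using x(3) zmod.zadd[OF zJ] by blast
  then show "sc (of_nat (q l)) (rep (F l)) \<in> J" by (simp add: sc_diff)
qed

lemma DS_out: "F \<in> DS G n S \<Longrightarrow> l \<notin> S \<Longrightarrow> F l = J"
  by (simp add: DS_def)

lemma DS_I:
  assumes "\<And>l. l \<in> S \<Longrightarrow> \<exists>x\<in>M. F l = qcoset J x \<and> sc (of_nat (q l)) x \<in> J"
    and "\<And>l. l \<notin> S \<Longrightarrow> F l = J"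
  shows "F \<in> DS G n S"
proof -
  have "F l \<in> SylQ G n l" if "l \<in> S" for l using assms(1)[OF that] SylQ_iff[OF S_prime[OF that]] by blast
  then show ?thesis using assms(2) by (simp add: DS_def)
qed

end


context mainctx begin

definition psi :: "(nat \<Rightarrow> ('a \<Rightarrow> rat) set) \<Rightarrow> ('a \<Rightarrow> rat) set" where
  "psi F = qcoset JR (\<Sum>l\<in>S. rep (F l))"

lemma sum_rep_M: "F \<in> DS G n S \<Longrightarrow> (\<Sum>l\<in>S. rep (F l)) \<in> M"
  using DS_comp(1) by (intro zmod.zsum[OF zM]) auto

lemma psi_in: "F \<in> DS G n S \<Longrightarrow> psi F \<in> Qn G R n"
  using sum_rep_M M_MR by (auto simp: psi_def Qn_R)

lemma psi_eqI: "(\<Sum>l\<in>S. rep (F l)) - y \<in> JR \<Longrightarrow> psi F = qcoset JR y"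
  using zmod.qcoset_eq[OF zJR] by (simp add: psi_def)

lemma J_coset0: "J = qcoset J 0" using zmod.qcoset_zero[OF zJ] by simp

lemma add_DS:
  assumes F: "F \<in> DS G n S" and F': "F' \<in> DS G n S"
  shows "ds_add F F' \<in> DS G n S" "psi (ds_add F F') = qadd (psi F) (psi F')"
proof -
  have comp: "ds_add F F' l = qcoset J (rep (F l) + rep (F' l))" if "l \<in> S" for l
    using DS_comp(2)[OF F that] DS_comp(2)[OF F' that] zmod.qadd_qcoset[OF zJ]
    by (simp add: ds_add_def) metis
  show "ds_add F F' \<in> DS G n S"
  proof (rule DS_I)
    fix l assume l: "l \<in> S"
    have "rep (F l) + rep (F' l) \<in> M" using DS_comp(1)[OF F l] DS_comp(1)[OF F' l] zmod.zadd[OF zM] by blast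
    moreover have "sc (of_nat (q l)) (rep (F l) + rep (F' l)) \<in> J"
      using DS_comp(3)[OF F l] DS_comp(3)[OF F' l] zmod.zadd[OF zJ] by (simp add: sc_add)
    ultimately show "\<exists>x\<in>M. ds_add F F' l = qcoset J x \<and> sc (of_nat (q l)) x \<in> J" using comp l by blast
  next
    fix l assume l: "l \<notin> S"
    have "qadd (qcoset J 0) (qcoset J 0) = qcoset J 0" using zmod.qadd_qcoset[OF zJ, of 0 0] by simp
    then show "ds_add F F' l = J" using DS_out[OF F l] DS_out[OF F' l] zmod.qcoset_zero[OF zJ] by (simp add: ds_add_def)
  qed
  have "(\<Sum>l\<in>S. rep (ds_add F F' l)) - ((\<Sum>l\<in>S. rep (F l)) + (\<Sum>l\<in>S. rep (F' l)))
      = (\<Sum>l\<in>S. rep (ds_add F F' l) - (rep (F l) + rep (F' l)))"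
    by (simp add: sum_subtractf sum.distrib)
  also have "\<dots> \<in> J"
  proof (rule zmod.zsum[OF zJ])
    fix l assume l: "l \<in> S"
    have "rep (F l) + rep (F' l) \<in> M" using DS_comp(1)[OF F l] DS_comp(1)[OF F' l] zmod.zadd[OF zM] by blast
    then show "rep (ds_add F F' l) - (rep (F l) + rep (F' l)) \<in> J" using comp[OF l] rep_coset by simp
  qed
  finally have "psi (ds_add F F') = qcoset JR ((\<Sum>l\<in>S. rep (F l)) + (\<Sum>l\<in>S. rep (F' l)))"
    using J_JR psi_eqI by blast
  also have "\<dots> = qadd (psi F) (psi F')" using zmod.qadd_qcoset[OF zJR] by (simp add: psi_def)
  finally show "psi (ds_add F F') = qadd (psi F) (psi F')" .
qed

lemma rsmul_DS:
  assumes r: "r \<in> R" and F: "F \<in> DS G n S"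
  shows "ds_rsmul G n S r F \<in> DS G n S" "psi (ds_rsmul G n S r F) = qsmul JR r (psi F)"
proof -
  obtain a b where ab: "quotient_of r = (a, b)" by (cases "quotient_of r")
  have b0: "b > 0" using quotient_of_denom_pos[OF ab] .
  have bR: "1 / of_int b \<in> R" using sr_denom[OF sr r ab] .
  have bT: "nat b \<in> Tset R" using b0 bR by (simp add: Tset_def)
  have rab: "r * of_int b = of_int a" using quotient_of_div[OF ab] b0 by simp
  have "\<forall>l\<in>S. \<exists>u v. u * b + v * int (q l) = 1"
  proof
    fix l assume l: "l \<in> S"
    have "coprime (int (nat b)) (int (q l))" using T_coprime[OF bT l] .
    then have "coprime b (int (q l))" using b0 by simp
    then obtain u v where "u * b + v * int (q l) = gcd b (int (q l))" using bezout_int by blast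
    then show "\<exists>u v. u * b + v * int (q l) = 1" using \<open>coprime b (int (q l))\<close> by auto
  qed
  then have "\<exists>uf. \<forall>l\<in>S. \<exists>v. uf l * b + v * int (q l) = 1" by (rule bchoice)
  then obtain uf where uf: "\<forall>l\<in>S. \<exists>v. uf l * b + v * int (q l) = 1" by blast
  define x where "x l = rep (F l)" for l
  define F' where "F' l = (if l \<in> S then qcoset J (sc (of_int (uf l)) (x l)) else J)" for l
  have F'in: "F' l = qcoset J (sc (of_int (uf l)) (x l))" if "l \<in> S" for l
    using that unfolding F'_def by (rule if_P)
  have F'out: "F' l = J" if "l \<notin> S" for l
    using that unfolding F'_def by (rule if_not_P)
  have xM: "x l \<in> M" "sc (of_nat (q l)) (x l) \<in> J" "F l = qcoset J (x l)" if "l \<in> S" for l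
    unfolding x_def by (rule DS_comp[OF F that])+
  have scJ: "\<And>c j. j \<in> J \<Longrightarrow> sc (of_int c) j \<in> J" using zmod.zsc[OF zJ] by blast
  have F'DS: "F' \<in> DS G n S"
  proof (rule DS_I)
    fix l assume l: "l \<in> S"
    have "sc (of_int (uf l)) (x l) \<in> M" using xM[OF l] zmod.zsc[OF zM] by blast
    moreover have "sc (of_nat (q l)) (sc (of_int (uf l)) (x l)) \<in> J"
      using scJ[OF xM(2)[OF l], of "uf l"] by (simp add: sc_sc mult.commute)
    ultimately show "\<exists>y\<in>M. F' l = qcoset J y \<and> sc (of_nat (q l)) y \<in> J" using l F'in by blast
  next
    fix l assume "l \<notin> S"
    then show "F' l = J" by (rule F'out)
  qed
  have F'F: "ds_zmult G n b F' = F"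
  proof
    fix l
    show "ds_zmult G n b F' l = F l"
    proof (cases "l \<in> S")
      case True
      obtain v where v: "uf l * b + v * int (q l) = 1" using uf True by blast
      have "ds_zmult G n b F' l = qcoset J (sc (of_int b) (sc (of_int (uf l)) (x l)))"
        using zmod.qsmul_qcoset[OF zJ scJ] True by (simp add: ds_zmult_def F'in)
      also have "\<dots> = qcoset J (x l)"
      proof -
        have "of_int b * of_int (uf l) - 1 = (of_int (- v) * of_nat (q l) :: rat)"
          using arg_cong[OF v, of "of_int :: int \<Rightarrow> rat"] by (simp add: algebra_simps)
        note eq = this
        have "sc (of_int b) (sc (of_int (uf l)) (x l)) - x l = sc (of_int b * of_int (uf l) - 1) (x l)"
          by (simp add: sc_sc sc_ldiff)
        also have "\<dots> = sc (of_int (-v) * of_nat (q l)) (x l)" using eq by simp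
        also have "\<dots> = sc (of_int (-v)) (sc (of_nat (q l)) (x l))" by (simp add: sc_sc)
        finally have eq2: "sc (of_int b) (sc (of_int (uf l)) (x l)) - x l = sc (of_int (-v)) (sc (of_nat (q l)) (x l))" .
        have "sc (of_int (-v)) (sc (of_nat (q l)) (x l)) \<in> J" using scJ[OF xM(2)[OF True], of "-v"] .
        then have "sc (of_int b) (sc (of_int (uf l)) (x l)) - x l \<in> J" by (simp only: eq2)
        then show ?thesis by (simp only: zmod.qcoset_eq[OF zJ])
      qed
      finally show ?thesis using xM(3)[OF True] by simp
    next
      case False
      have "qsmul J (of_int b) (qcoset J 0) = qcoset J (sc (of_int b) 0)" using zmod.qsmul_qcoset[OF zJ scJ, of b 0] .
      then have h: "qsmul J (of_int b) J = J" by (simp only: sc_zero zmod.qcoset_zero[OF zJ])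
      have "ds_zmult G n b F' l = qsmul J (of_int b) (F' l)" by (simp only: ds_zmult_def)
      also have "\<dots> = J" by (simp only: F'out[OF False] h)
      also have "\<dots> = F l" using DS_out[OF F False] by (rule sym)
      finally show ?thesis .
    qed
  qed
  have uniq: "F'' = F'" if F'': "F'' \<in> DS G n S" "ds_zmult G n b F'' = F" for F''
  proof
    fix l
    show "F'' l = F' l"
    proof (cases "l \<in> S")
      case True
      define y where "y = rep (F'' l)"
      define y' where "y' = rep (F' l)"
      have y: "y \<in> M" "F'' l = qcoset J y" "sc (of_nat (q l)) y \<in> J" unfolding y_def by (rule DS_comp[OF F''(1) True])+
      have y': "y' \<in> M" "F' l = qcoset J y'" "sc (of_nat (q l)) y' \<in> J" unfolding y'_def by (rule DS_comp[OF F'DS True])+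
      have "qcoset J (sc (of_int b) y) = qsmul J (of_int b) (qcoset J y)" by (rule zmod.qsmul_qcoset[OF zJ scJ, symmetric])
      also have "\<dots> = qsmul J (of_int b) (F'' l)" by (simp only: y(2))
      also have "\<dots> = ds_zmult G n b F'' l" by (simp only: ds_zmult_def)
      also have "\<dots> = F l" by (simp only: F''(2))
      finally have h1: "qcoset J (sc (of_int b) y) = F l" .
      have "qcoset J (sc (of_int b) y') = qsmul J (of_int b) (qcoset J y')" by (rule zmod.qsmul_qcoset[OF zJ scJ, symmetric])
      also have "\<dots> = qsmul J (of_int b) (F' l)" by (simp only: y'(2))
      also have "\<dots> = ds_zmult G n b F' l" by (simp only: ds_zmult_def)
      also have "\<dots> = F l" by (simp only: F'F)
      finally have h2: "qcoset J (sc (of_int b) y') = F l" .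
      from h1 h2 have "qcoset J (sc (of_int b) y) = qcoset J (sc (of_int b) y')" by simp
      then have "sc (of_int b) y - sc (of_int b) y' \<in> J" by (simp only: zmod.qcoset_eq[OF zJ])
      then have "sc (of_int b) (y - y') \<in> J" by (simp only: sc_diff)
      moreover have "sc (of_int (int (q l))) (y - y') \<in> J" using y(3) y'(3) zmod.zdiff[OF zJ] by (simp add: sc_diff)
      moreover have "coprime b (int (q l))" using T_coprime[OF bT True] b0 by simp
      ultimately have "y - y' \<in> J" using zmod.zcop[OF zJ] by blast
      then show ?thesis using y(2) y'(2) zmod.qcoset_eq[OF zJ] by simp
    next
      case False
      then show ?thesis using DS_out[OF F''(1) False] F'out[OF False] by simp
    qed
  qed
  have theF: "(THE F'. F' \<in> DS G n S \<and> ds_zmult G n b F' = F) = F'"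
    using F'DS F'F uniq by (intro the_equality) blast+
  have rs: "ds_rsmul G n S r F = ds_zmult G n a F'" by (simp add: ds_rsmul_def ab theF)
  define z where "z l = sc (of_int a) (sc (of_int (uf l)) (x l))" for l
  have rsl: "ds_rsmul G n S r F l = qcoset J (z l)" if "l \<in> S" for l
    using zmod.qsmul_qcoset[OF zJ scJ] that by (simp add: rs ds_zmult_def F'in z_def)
  have zM: "z l \<in> M" "sc (of_nat (q l)) (z l) \<in> J" if "l \<in> S" for l
  proof -
    show "z l \<in> M" using xM(1)[OF that] zmod.zsc[OF zM] by (simp add: z_def)
    show "sc (of_nat (q l)) (z l) \<in> J"
      using scJ[OF xM(2)[OF that], of "a * uf l"] by (simp add: z_def sc_sc mult.commute mult.left_commute)
  qed
  show "ds_rsmul G n S r F \<in> DS G n S"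
  proof (rule DS_I)
    fix l assume "l \<in> S"
    then show "\<exists>y\<in>M. ds_rsmul G n S r F l = qcoset J y \<and> sc (of_nat (q l)) y \<in> J" using rsl zM by blast
  next
    fix l assume l: "l \<notin> S"
    have "qsmul J (of_int a) (qcoset J 0) = qcoset J (sc (of_int a) 0)" using zmod.qsmul_qcoset[OF zJ scJ, of a 0] .
    then have h: "qsmul J (of_int a) J = J" by (simp only: sc_zero zmod.qcoset_zero[OF zJ])
    have "ds_rsmul G n S r F l = qsmul J (of_int a) (F' l)" by (simp only: rs ds_zmult_def)
    also have "\<dots> = J" by (simp only: F'out[OF l] h)
    finally show "ds_rsmul G n S r F l = J" .
  qed
  have scR: "\<And>j. j \<in> JR \<Longrightarrow> sc r j \<in> JR" using aug_pow_sc[OF sr r] by blast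
  have "(\<Sum>l\<in>S. rep (ds_rsmul G n S r F l)) - sc r (\<Sum>l\<in>S. x l)
      = (\<Sum>l\<in>S. rep (ds_rsmul G n S r F l) - z l) + (\<Sum>l\<in>S. z l - sc r (x l))"
    by (simp add: sc_sum sum_subtractf)
  also have "\<dots> \<in> JR"
  proof (rule zmod.zadd[OF zJR])
    show "(\<Sum>l\<in>S. rep (ds_rsmul G n S r F l) - z l) \<in> JR"
      using rsl zM rep_coset J_JR by (intro zmod.zsum[OF zJR]) auto
    show "(\<Sum>l\<in>S. z l - sc r (x l)) \<in> JR"
    proof (rule zmod.zsum[OF zJR])
      fix l assume l: "l \<in> S"
      obtain v where v: "uf l * b + v * int (q l) = 1" using uf l by blast
      have "of_int a * of_int (uf l) - r = r * (of_int (uf l) * of_int b - 1)"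
        using rab by (simp add: algebra_simps)
      also have "\<dots> = - r * of_int v * of_nat (q l)"
      proof -
        have "of_int b * of_int (uf l) + of_int v * of_nat (q l) = (1::rat)"
          using arg_cong[OF v, of "of_int :: int \<Rightarrow> rat"] by (simp add: algebra_simps)
        then have "r * (of_int b * of_int (uf l) + of_int v * of_nat (q l)) = r" by simp
        then show ?thesis by (simp add: algebra_simps)
      qed
      finally have e: "of_int a * of_int (uf l) - r = - r * of_int v * of_nat (q l)" .
      have "z l - sc r (x l) = sc (of_int a * of_int (uf l) - r) (x l)"
        by (simp add: z_def sc_sc sc_ldiff)
      also have "\<dots> = sc (- r * of_int v * of_nat (q l)) (x l)" using e by simp
      also have "\<dots> = sc (- r * of_int v) (sc (of_nat (q l)) (x l))" by (simp add: sc_sc)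
      finally have "z l - sc r (x l) = sc (- r * of_int v) (sc (of_nat (q l)) (x l))" .
      moreover have "- r * of_int v \<in> R" using sr r by (simp add: sr_mult sr_neg sr_int)
      ultimately show "z l - sc r (x l) \<in> JR"
        using aug_pow_sc[OF sr _ J_JR[THEN subsetD, OF xM(2)[OF l]]] by simp
    qed
  qed
  finally have "psi (ds_rsmul G n S r F) = qcoset JR (sc r (\<Sum>l\<in>S. x l))" by (rule psi_eqI)
  also have "\<dots> = qsmul JR r (psi F)" using zmod.qsmul_qcoset[OF zJR scR] by (simp add: psi_def x_def)
  finally show "psi (ds_rsmul G n S r F) = qsmul JR r (psi F)" .
qed

end


context mainctx begin

lemma sc_nat_int: "sc (of_int (int m)) f = sc (of_nat m) f" by simp

lemma psi_inj:
  assumes F: "F \<in> DS G n S" and F': "F' \<in> DS G n S" and eq: "psi F = psi F'"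
  shows "F = F'"
proof
  fix l0
  show "F l0 = F' l0"
  proof (cases "l0 \<in> S")
    case False
    then show ?thesis using DS_out[OF F False] DS_out[OF F' False] by simp
  next
    case True
    define w where "w l = rep (F l) - rep (F' l)" for l
    have wq: "sc (of_int (int (q l))) (w l) \<in> J" if "l \<in> S" for l
    proof -
      have "sc (of_nat (q l)) (rep (F l)) - sc (of_nat (q l)) (rep (F' l)) \<in> J"
        using DS_comp(3)[OF F that] DS_comp(3)[OF F' that] by (rule zmod.zdiff[OF zJ])
      then show ?thesis by (simp only: w_def sc_diff sc_nat_int)
    qed
    have "(\<Sum>l\<in>S. rep (F l)) - (\<Sum>l\<in>S. rep (F' l)) \<in> JR"
      using eq unfolding psi_def by (simp only: zmod.qcoset_eq[OF zJR])
    then have sw: "(\<Sum>l\<in>S. w l) \<in> JR" by (simp only: w_def sum_subtractf)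
    obtain D where D: "D \<in> Tset R" "(\<lambda>a. of_nat D * (\<Sum>l\<in>S. w l) a) \<in> J"
      using loc_aug_pow[OF sr fin sw] by blast
    have D': "sc (of_nat D) (\<Sum>l\<in>S. w l) \<in> J" using D(2) by (simp only: sc_def)
    define Pr where "Pr = (\<Prod>l\<in>S - {l0}. q l)"
    have tot: "sc (of_int (int (D * Pr))) (\<Sum>l\<in>S. w l) \<in> J"
    proof -
      have "sc (of_int (int Pr)) (sc (of_nat D) (\<Sum>l\<in>S. w l)) \<in> J" using zmod.zsc[OF zJ D'] .
      moreover have "sc (of_int (int Pr)) (sc (of_nat D) (\<Sum>l\<in>S. w l)) = sc (of_int (int (D * Pr))) (\<Sum>l\<in>S. w l)"
        by (simp add: sc_sc mult.commute)
      ultimately show ?thesis by simp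
    qed
    have split: "sc (of_int (int (D * Pr))) (\<Sum>l\<in>S. w l)
        = sc (of_int (int (D * Pr))) (w l0) + (\<Sum>l\<in>S - {l0}. sc (of_int (int (D * Pr))) (w l))"
      using sum.remove[OF fin_S True, of w] by (simp add: sc_add sc_sum)
    have rest: "(\<Sum>l\<in>S - {l0}. sc (of_int (int (D * Pr))) (w l)) \<in> J"
    proof (rule zmod.zsum[OF zJ])
      fix l assume l: "l \<in> S - {l0}"
      have "q l dvd Pr" unfolding Pr_def using l fin_S by (intro dvd_prodI) auto
      then have "int (q l) dvd int (D * Pr)" by simp
      then show "sc (of_int (int (D * Pr))) (w l) \<in> J" using zmod.zdvd[OF zJ] wq l by blast
    qed
    have "sc (of_int (int (D * Pr))) (w l0) \<in> J"
    proof -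
      have "sc (of_int (int (D * Pr))) (w l0) = sc (of_int (int (D * Pr))) (\<Sum>l\<in>S. w l) - (\<Sum>l\<in>S - {l0}. sc (of_int (int (D * Pr))) (w l))"
        by (simp only: split add_diff_cancel_right')
      then show ?thesis using zmod.zdiff[OF zJ tot rest] by simp
    qed
    moreover have "coprime (int (D * Pr)) (int (q l0))"
    proof -
      have c1: "coprime (int D) (int (q l0))" using T_coprime[OF D(1) True] .
      have "coprime Pr (q l0)" unfolding Pr_def
      proof (rule prod_coprime_left)
        fix l assume "l \<in> S - {l0}"
        then show "coprime (q l) (q l0)" using q_coprime S_prime True by auto
      qed
      then have c2: "coprime (int Pr) (int (q l0))" by simp
      show ?thesis using c1 c2 by simp
    qed
    ultimately have "w l0 \<in> J" using wq[OF True] zmod.zcop[OF zJ] by blast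
    then have "qcoset J (rep (F l0)) = qcoset J (rep (F' l0))" unfolding w_def by (simp only: zmod.qcoset_eq[OF zJ])
    then show ?thesis using DS_comp(2)[OF F True] DS_comp(2)[OF F' True] by simp
  qed
qed

end


context mainctx begin

lemma NN_split: "NN = (\<Prod>l\<in>S. q l) * (\<Prod>p\<in>PP - S. q p)"
proof -
  have "NN = (\<Prod>p\<in>PP. p ^ multiplicity p NN)" using prime_factorization_nat[OF NN_pos] .
  also have "\<dots> = (\<Prod>p\<in>PP. q p)" by (simp add: q_def)
  also have "\<dots> = (\<Prod>p\<in>PP - S. q p) * (\<Prod>l\<in>S. q l)" using prod.subset_diff[OF S_sub fin_PP] .
  finally show ?thesis by (simp add: mult.commute)
qed

lemma NT_T: "(\<Prod>p\<in>PP - S. q p) \<in> Tset R"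
proof -
  have pos: "(\<Prod>p\<in>PP - S. q p) > 0" using q_pos PP_prime by (intro prod_pos) auto
  have "1 / (of_nat (\<Prod>p\<in>PP - S. q p) :: rat) = (\<Prod>p\<in>PP - S. (1 / of_nat p) ^ multiplicity p NN)"
    by (simp add: q_def power_one_over prod_dividef)
  moreover have "(\<Prod>p\<in>PP - S. (1 / (of_nat p :: rat)) ^ multiplicity p NN) \<in> R"
    using PP_notS by (intro sr_prod[OF sr] sr_pow[OF sr]) auto
  ultimately show ?thesis using pos by (simp add: Tset_def)
qed

lemma psi_surj:
  assumes X: "X \<in> Qn G R n"
  shows "\<exists>F\<in>DS G n S. psi F = X"
proof -
  obtain x where x: "x \<in> MR" "X = qcoset JR x" using X by (auto simp: Qn_R)
  obtain D where D: "D \<in> Tset R" "(\<lambda>a. of_nat D * x a) \<in> M" using loc_aug_pow[OF sr fin x(1)] by blast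
  define NS where "NS = (\<Prod>l\<in>S. q l)"
  define NT where "NT = (\<Prod>p\<in>PP - S. q p)"
  have NNe: "NN = NS * NT" unfolding NS_def NT_def by (rule NN_split)
  define E where "E = D * NT"
  have ET: "E \<in> Tset R" unfolding E_def NT_def using Tset_mult[OF sr D(1) NT_T] .
  have E0: "E > 0" using ET by (simp add: Tset_def)
  have ER: "1 / of_nat E \<in> R" using ET by (simp add: Tset_def)
  define y where "y = sc (of_nat E) x"
  have yM: "y \<in> M"
  proof -
    have D'': "sc (of_nat D) x \<in> M" using D(2) by (simp only: sc_def)
    have "sc (of_int (int NT)) (sc (of_nat D) x) \<in> M" using zmod.zsc[OF zM D''] .
    then show ?thesis by (simp add: y_def E_def sc_sc mult.commute)
  qed
  have yNS: "sc (of_int (int NS)) y \<in> J"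
  proof -
    have "sc (of_int (int NN)) (sc (of_nat D) x) \<in> J" using NN_kill D(2) by (simp add: sc_def)
    moreover have "sc (of_int (int NN)) (sc (of_nat D) x) = sc (of_int (int NS)) y"
      by (simp add: y_def E_def NNe sc_sc mult_ac)
    ultimately show ?thesis by simp
  qed
  define m where "m l = (\<Prod>l'\<in>S - {l}. q l')" for l
  have qm: "q l * m l = NS" if "l \<in> S" for l
    unfolding m_def NS_def using prod.remove[OF fin_S that, of q] by simp
  have "\<forall>l\<in>S. \<exists>t s. t * int (E * m l) + s * int (q l) = 1"
  proof
    fix l assume l: "l \<in> S"
    have c1: "coprime (int E) (int (q l))" using T_coprime[OF ET l] .
    have "coprime (m l) (q l)" unfolding m_def
    proof (rule prod_coprime_left)
      fix l' assume "l' \<in> S - {l}"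
      then show "coprime (q l') (q l)" using q_coprime S_prime l by auto
    qed
    then have c2: "coprime (int (m l)) (int (q l))" by simp
    have "coprime (int (E * m l)) (int (q l))" using c1 c2 by simp
    then obtain t s where "t * int (E * m l) + s * int (q l) = gcd (int (E * m l)) (int (q l))"
      using bezout_int by blast
    then show "\<exists>t s. t * int (E * m l) + s * int (q l) = 1" using \<open>coprime (int (E * m l)) (int (q l))\<close> by auto
  qed
  then have "\<exists>tf. \<forall>l\<in>S. \<exists>s. tf l * int (E * m l) + s * int (q l) = 1" by (rule bchoice)
  then obtain t where t: "\<forall>l\<in>S. \<exists>s. t l * int (E * m l) + s * int (q l) = 1" by blast
  define xl where "xl l = sc (of_int (t l * int (m l))) y" for l
  have xlM: "xl l \<in> M" for l unfolding xl_def using zmod.zsc[OF zM yM] .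
  have xlq: "sc (of_nat (q l)) (xl l) \<in> J" if "l \<in> S" for l
  proof -
    have "sc (of_nat (q l)) (xl l) = sc (of_int (t l)) (sc (of_int (int NS)) y)"
    proof -
      have e: "(of_nat (m l) * of_nat (q l) :: rat) = of_nat NS" using qm[OF that] by (metis of_nat_mult mult.commute)
      have "sc (of_nat (q l)) (xl l) = sc (of_int (t l) * (of_nat (m l) * of_nat (q l))) y"
        by (simp add: xl_def sc_sc mult_ac)
      also have "\<dots> = sc (of_int (t l)) (sc (of_int (int NS)) y)" by (simp only: e sc_sc of_int_of_nat_eq)
      finally show ?thesis .
    qed
    then show ?thesis using zmod.zsc[OF zJ yNS] by simp
  qed
  define F where "F l = (if l \<in> S then qcoset J (xl l) else J)" for l
  have Fin: "F l = qcoset J (xl l)" if "l \<in> S" for l using that unfolding F_def by (rule if_P)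
  have Fout: "F l = J" if "l \<notin> S" for l using that unfolding F_def by (rule if_not_P)
  have FDS: "F \<in> DS G n S"
  proof (rule DS_I)
    fix l assume "l \<in> S"
    then show "\<exists>x\<in>M. F l = qcoset J x \<and> sc (of_nat (q l)) x \<in> J" using Fin xlM xlq by blast
  next
    fix l assume "l \<notin> S"
    then show "F l = J" by (rule Fout)
  qed
  define K where "K = (\<Sum>l\<in>S. t l * int (E * m l)) - 1"
  have NSK: "int NS dvd K"
    unfolding NS_def
  proof (rule prod_dvd[OF fin_S S_prime])
    fix l assume l: "l \<in> S"
    obtain s where s: "t l * int (E * m l) + s * int (q l) = 1" using t l by blast
    have "K = (t l * int (E * m l) - 1) + (\<Sum>l'\<in>S - {l}. t l' * int (E * m l'))"
      unfolding K_def using sum.remove[OF fin_S l, of "\<lambda>l'. t l' * int (E * m l')"] by simp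
    also have "\<dots> = - s * int (q l) + (\<Sum>l'\<in>S - {l}. t l' * int (E * m l'))" using s by simp
    finally have Ke: "K = - s * int (q l) + (\<Sum>l'\<in>S - {l}. t l' * int (E * m l'))" .
    have "int (q l) dvd (\<Sum>l'\<in>S - {l}. t l' * int (E * m l'))"
    proof (rule dvd_sum)
      fix l' assume l': "l' \<in> S - {l}"
      have "q l dvd m l'" unfolding m_def using l l' fin_S by (intro dvd_prodI) auto
      then show "int (q l) dvd t l' * int (E * m l')" by simp
    qed
    then show "int (q l) dvd K" unfolding Ke by simp
  qed
  have KJ: "sc (of_int K) y \<in> J" using zmod.zdvd[OF zJ NSK yNS] .
  have key: "sc (of_nat E) ((\<Sum>l\<in>S. xl l) - x) = sc (of_int K) y"
  proof -
    have "sc (of_nat E) (\<Sum>l\<in>S. xl l) = (\<Sum>l\<in>S. sc (of_int (t l * int (E * m l))) y)"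
      by (simp add: sc_sum xl_def sc_sc mult_ac)
    also have "\<dots> = sc (of_int (\<Sum>l\<in>S. t l * int (E * m l))) y"
      by (simp add: sc_lsum)
    finally have a: "sc (of_nat E) (\<Sum>l\<in>S. xl l) = sc (of_int (\<Sum>l\<in>S. t l * int (E * m l))) y" .
    have "sc (of_nat E) ((\<Sum>l\<in>S. xl l) - x) = sc (of_int (\<Sum>l\<in>S. t l * int (E * m l))) y - y"
      by (simp only: sc_diff a y_def)
    also have "\<dots> = sc (of_int K) y" by (simp add: K_def sc_ldiff)
    finally show ?thesis .
  qed
  have part2: "(\<Sum>l\<in>S. xl l) - x \<in> JR"
  proof -
    have "(\<Sum>l\<in>S. xl l) - x = sc (1 / of_nat E) (sc (of_nat E) ((\<Sum>l\<in>S. xl l) - x))"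
      using E0 by (simp add: sc_sc)
    also have "\<dots> = sc (1 / of_nat E) (sc (of_int K) y)" by (simp only: key)
    finally show ?thesis using aug_pow_sc[OF sr ER J_JR[THEN subsetD, OF KJ]] by simp
  qed
  have part1: "(\<Sum>l\<in>S. rep (F l) - xl l) \<in> JR"
  proof (rule zmod.zsum[OF zJR])
    fix l assume l: "l \<in> S"
    have "rep (F l) - xl l \<in> J" unfolding Fin[OF l] using rep_coset[OF xlM] .
    then show "rep (F l) - xl l \<in> JR" using J_JR by blast
  qed
  have "(\<Sum>l\<in>S. rep (F l)) - x = (\<Sum>l\<in>S. rep (F l) - xl l) + ((\<Sum>l\<in>S. xl l) - x)"
    by (simp add: sum_subtractf)
  also have "\<dots> \<in> JR" using zmod.zadd[OF zJR part1 part2] .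
  finally have "psi F = qcoset JR x" by (rule psi_eqI)
  then show ?thesis using FDS x(2) by blast
qed

end


theorem proposition1p4:
  fixes G :: "('a, 'b) monoid_scheme" and R :: "rat set" and n :: nat and S :: "nat set"
  assumes "comm_group G" and "finite (carrier G)" and "subring_rat R" and "n \<ge> 1"
    and "S = {l. prime l \<and> l dvd card (carrier G) \<and> 1 / of_nat l \<notin> R}"
  shows "\<exists>\<phi>. bij_betw \<phi> (Qn G R n) (DS G n S)
     \<and> (\<forall>X\<in>Qn G R n. \<forall>Y\<in>Qn G R n. \<phi> (qadd X Y) = ds_add (\<phi> X) (\<phi> Y))
     \<and> (\<forall>r\<in>R. \<forall>X\<in>Qn G R n. \<phi> (qsmul (aug_pow G R (Suc n)) r X) = ds_rsmul G n S r (\<phi> X))"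
proof -
  have grp: "group G" using assms(1) by (simp add: comm_group_def)
  interpret mainctx G R n S
    by (rule mainctx.intro[OF grp assms(2-5)])
  have inj: "inj_on psi (DS G n S)" using psi_inj by (auto simp: inj_on_def)
  have img: "psi ` DS G n S = Qn G R n" using psi_in psi_surj by blast
  have bij: "bij_betw psi (DS G n S) (Qn G R n)" using inj img by (simp add: bij_betw_def)
  define phi where "phi = inv_into (DS G n S) psi"
  have bphi: "bij_betw phi (Qn G R n) (DS G n S)" unfolding phi_def by (rule bij_betw_inv_into[OF bij])
  have phiDS: "phi X \<in> DS G n S" if "X \<in> Qn G R n" for X
    using that img unfolding phi_def by (metis inv_into_into)
  have psiphi: "psi (phi X) = X" if "X \<in> Qn G R n" for X
    using that img unfolding phi_def by (metis f_inv_into_f)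
  have phipsi: "phi (psi F) = F" if "F \<in> DS G n S" for F
    unfolding phi_def by (rule inv_into_f_f[OF inj that])
  have add: "phi (qadd X Y) = ds_add (phi X) (phi Y)" if "X \<in> Qn G R n" "Y \<in> Qn G R n" for X Y
  proof -
    have "qadd X Y = psi (ds_add (phi X) (phi Y))"
      using add_DS(2)[OF phiDS[OF that(1)] phiDS[OF that(2)]] psiphi that by simp
    then show ?thesis using phipsi add_DS(1)[OF phiDS[OF that(1)] phiDS[OF that(2)]] by simp
  qed
  have smul: "phi (qsmul (aug_pow G R (Suc n)) r X) = ds_rsmul G n S r (phi X)" if "r \<in> R" "X \<in> Qn G R n" for r X
  proof -
    have "qsmul (aug_pow G R (Suc n)) r X = psi (ds_rsmul G n S r (phi X))"
      using rsmul_DS(2)[OF that(1) phiDS[OF that(2)]] psiphi[OF that(2)] by simp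
    then show ?thesis using phipsi rsmul_DS(1)[OF that(1) phiDS[OF that(2)]] by simp
  qed
  show ?thesis using bphi add smul by blast
qed


end
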